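(* Let $\mathfrak{m}_1,\dots,\mathfrak{m}_n$ be maximal ideals of $R$ and $M=R/\mathfrak{m}_1\oplus\cdots\oplus R/\mathfrak{m}_n$. Then $M$ satisfies the dual of proper strong Property $\mathcal{A}$ if and only if either $\mathrm{Max}(R)=\{\mathfrak{m}_1,\dots,\mathfrak{m}_n\}$ or $\mathfrak{m}_1=\mathfrak{m}_2=\cdots=\mathfrak{m}_n$.
   Context: All rings are commutative with identity; $\mathrm{Max}(R)$ is the set of maximal ideals of $R$. For an $R$-module $M$, $W_R(M)=\{r\in R : rM\neq M\}$. $M$ satisfies the dual of proper strong Property $\mathcal{A}$ if for every proper finitely generated ideal $I=\langle a_1,\dots,a_n\rangle$ of $R$ with $a_i\in W_R(M)$ for all $i$, we have $IM\neq M$. *)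

theory Defs
  imports Main
begin

definition is_ideal :: "'a::comm_ring_1 set \<Rightarrow> bool" where
  "is_ideal I \<longleftrightarrow> 0 \<in> I \<and> (\<forall>x\<in>I. \<forall>y\<in>I. x + y \<in> I) \<and> (\<forall>r. \<forall>x\<in>I. r * x \<in> I)"

definition maximal_ideal :: "'a::comm_ring_1 set \<Rightarrow> bool" where
  "maximal_ideal m \<longleftrightarrow> is_ideal m \<and> m \<noteq> UNIV \<and>
     (\<forall>J. is_ideal J \<and> m \<subseteq> J \<longrightarrow> J = m \<or> J = UNIV)"

definition Max_spec :: "'a::comm_ring_1 set set" where
  "Max_spec = {m. maximal_ideal m}"

definition ideal_gen :: "'a::comm_ring_1 list \<Rightarrow> 'a set" where
  "ideal_gen as = {x. \<exists>c. x = (\<Sum>j<length as. c j * as ! j)}"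

text \<open>The module M = R/m_1 (+) ... (+) R/m_n, represented by representatives
  v :: nat => 'a (only components 1..n matter); two representatives denote
  the same element of M iff their differences lie in m_i for i = 1..n.\<close>

definition dsq_eq :: "(nat \<Rightarrow> 'a::comm_ring_1 set) \<Rightarrow> nat \<Rightarrow> (nat \<Rightarrow> 'a) \<Rightarrow> (nat \<Rightarrow> 'a) \<Rightarrow> bool" where
  "dsq_eq m n v w \<longleftrightarrow> (\<forall>i\<in>{1..n}. v i - w i \<in> m i)"

definition dsq_IM :: "'a::comm_ring_1 set \<Rightarrow> (nat \<Rightarrow> 'a) set" where
  "dsq_IM I = {u. \<exists>(k::nat) c xs. (\<forall>j<k. c j \<in> I) \<and> u = (\<lambda>i. \<Sum>j<k. c j * xs j i)}"

definition dsq_IM_ne :: "(nat \<Rightarrow> 'a::comm_ring_1 set) \<Rightarrow> nat \<Rightarrow> 'a set \<Rightarrow> bool" where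
  "dsq_IM_ne m n I \<longleftrightarrow> (\<exists>w. \<forall>u\<in>dsq_IM I. \<not> dsq_eq m n u w)"

text \<open>W_R(M) = {r. rM \<noteq> M}.\<close>

definition dsq_W :: "(nat \<Rightarrow> 'a::comm_ring_1 set) \<Rightarrow> nat \<Rightarrow> 'a set" where
  "dsq_W m n = {r. \<exists>w. \<forall>v. \<not> dsq_eq m n (\<lambda>i. r * v i) w}"

definition dsq_dual_pspA :: "(nat \<Rightarrow> 'a::comm_ring_1 set) \<Rightarrow> nat \<Rightarrow> bool" where
  "dsq_dual_pspA m n \<longleftrightarrow>
     (\<forall>as. set as \<subseteq> dsq_W m n \<and> ideal_gen as \<noteq> UNIV \<longrightarrow> dsq_IM_ne m n (ideal_gen as))"

end

theory Submission
  imports Defs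
begin

lemma ideal_sum:
  assumes "is_ideal I" "\<forall>j\<in>A. f j \<in> I"
  shows "sum f A \<in> I"
proof (cases "finite A")
  case True
  have add: "\<And>x y. x \<in> I \<Longrightarrow> y \<in> I \<Longrightarrow> x + y \<in> I" and z: "0 \<in> I"
    using assms(1) unfolding is_ideal_def by blast+
  from True show ?thesis using assms(2)
  proof (induction A rule: finite_induct)
    case empty then show ?case using z by simp
  next
    case (insert a F)
    then have "f a \<in> I" "sum f F \<in> I" by simp_all
    then have "f a + sum f F \<in> I" by (rule add)
    then show ?case using insert(1,2) by simp
  qed
next
  case False then show ?thesis using assms(1) by (simp add: is_ideal_def)
qed

lemma ideal_mult: "is_ideal I \<Longrightarrow> x \<in> I \<Longrightarrow> r * x \<in> I"
  by (simp add: is_ideal_def)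

lemma ideal_mult2: "is_ideal I \<Longrightarrow> x \<in> I \<Longrightarrow> x * r \<in> I"
  by (metis ideal_mult mult.commute)

lemma ideal_neg: "is_ideal I \<Longrightarrow> x \<in> I \<Longrightarrow> - x \<in> I"
  using ideal_mult[of I x "-1"] by simp

lemma ideal_diff: "is_ideal I \<Longrightarrow> x \<in> I \<Longrightarrow> y \<in> I \<Longrightarrow> x - y \<in> I"
proof -
  assume h: "is_ideal I" "x \<in> I" "y \<in> I"
  have "- y \<in> I" using h(1,3) by (rule ideal_neg)
  moreover have "\<forall>x\<in>I. \<forall>y\<in>I. x + y \<in> I" using h(1) unfolding is_ideal_def by blast
  ultimately have "x + - y \<in> I" using h(2) by blast
  then show "x - y \<in> I" by simp
qed

lemma ideal_one: "is_ideal I \<Longrightarrow> 1 \<in> I \<Longrightarrow> I = UNIV"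
proof -
  assume "is_ideal I" "1 \<in> I"
  then have "\<And>r. r * 1 \<in> I" by (rule ideal_mult)
  then show "I = UNIV" by auto
qed

lemma max_inv:
  assumes "maximal_ideal m" "x \<notin> m"
  shows "\<exists>s. x * s - 1 \<in> m"
proof -
  define J where "J = {y. \<exists>a\<in>m. \<exists>s. y = a + s * x}"
  have im: "is_ideal m" using assms(1) by (simp add: maximal_ideal_def)
  have memJ: "a + s * x \<in> J" if "a \<in> m" for a s
    unfolding J_def using that by blast
  have "is_ideal J"
    unfolding is_ideal_def
  proof (intro conjI ballI allI)
    have "0 \<in> m" using im by (simp add: is_ideal_def)
    then have "0 + 0 * x \<in> J" by (rule memJ)
    then show "0 \<in> J" by simp
  next
    fix u v assume "u \<in> J" "v \<in> J"
    then obtain a s b t where h: "u = a + s * x" "a \<in> m" "v = b + t * x" "b \<in> m"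
      unfolding J_def by blast
    have "a + b \<in> m" using im h by (simp add: is_ideal_def)
    then have "(a + b) + (s + t) * x \<in> J" by (rule memJ)
    moreover have "u + v = (a + b) + (s + t) * x" using h by (simp add: algebra_simps)
    ultimately show "u + v \<in> J" by simp
  next
    fix r u assume "u \<in> J"
    then obtain a s where h: "u = a + s * x" "a \<in> m" unfolding J_def by blast
    have "r * a \<in> m" using im h by (simp add: is_ideal_def)
    then have "(r * a) + (r * s) * x \<in> J" by (rule memJ)
    moreover have "r * u = (r * a) + (r * s) * x" using h by (simp add: algebra_simps)
    ultimately show "r * u \<in> J" by simp
  qed
  moreover have "m \<subseteq> J"
  proof
    fix a assume "a \<in> m"
    then have "a + 0 * x \<in> J" by (rule memJ)
    then show "a \<in> J" by simp
  qed
  moreover have "x \<in> J"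
  proof -
    have "0 \<in> m" using im by (simp add: is_ideal_def)
    then have "0 + 1 * x \<in> J" by (rule memJ)
    then show ?thesis by simp
  qed
  ultimately have "J = m \<or> J = UNIV" using assms(1) unfolding maximal_ideal_def by blast
  then have "J = UNIV" using \<open>x \<in> J\<close> assms(2) by auto
  then have "1 \<in> J" by simp
  then obtain a s where h: "1 = a + s * x" "a \<in> m" unfolding J_def by blast
  then have "x * s - 1 = - a" by (simp add: algebra_simps)
  moreover have "- a \<in> m" using ideal_neg[OF im h(2)] .
  ultimately show ?thesis by (intro exI[of _ s]) simp
qed

lemma max_one: "maximal_ideal m \<Longrightarrow> 1 \<notin> m"
  using ideal_one by (auto simp: maximal_ideal_def)

lemma max_prime:
  assumes "maximal_ideal m" "x * z \<in> m" "x \<notin> m"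
  shows "z \<in> m"
proof -
  have im: "is_ideal m" using assms(1) by (simp add: maximal_ideal_def)
  obtain s where s: "x * s - 1 \<in> m" using max_inv assms by blast
  have "z = s * (x * z) - z * (x * s - 1)" by (simp add: algebra_simps)
  also have "\<dots> \<in> m" using ideal_diff[OF im ideal_mult[OF im assms(2)] ideal_mult[OF im s]] .
  finally show ?thesis .
qed

lemma ideal_gen_ideal: "is_ideal (ideal_gen as)"
  unfolding is_ideal_def ideal_gen_def
proof (intro conjI ballI allI)
  show "0 \<in> {x. \<exists>c. x = (\<Sum>j<length as. c j * as ! j)}" by (auto intro: exI[of _ "\<lambda>_. 0"])
next
  fix x y assume "x \<in> {x. \<exists>c. x = (\<Sum>j<length as. c j * as ! j)}" "y \<in> {x. \<exists>c. x = (\<Sum>j<length as. c j * as ! j)}"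
  then obtain c d where "x = (\<Sum>j<length as. c j * as ! j)" "y = (\<Sum>j<length as. d j * as ! j)" by blast
  then show "x + y \<in> {x. \<exists>c. x = (\<Sum>j<length as. c j * as ! j)}"
    by (auto simp: sum.distrib[symmetric] distrib_right intro!: exI[of _ "\<lambda>j. c j + d j"])
next
  fix r x assume "x \<in> {x. \<exists>c. x = (\<Sum>j<length as. c j * as ! j)}"
  then obtain c where "x = (\<Sum>j<length as. c j * as ! j)" by blast
  then show "r * x \<in> {x. \<exists>c. x = (\<Sum>j<length as. c j * as ! j)}"
    by (auto simp: sum_distrib_left mult.assoc intro!: exI[of _ "\<lambda>j. r * c j"])
qed

lemma ideal_gen_mem: "x \<in> set as \<Longrightarrow> x \<in> ideal_gen as"
proof -
  assume "x \<in> set as"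
  then obtain k where k: "k < length as" "as ! k = x" by (meson in_set_conv_nth)
  have "(\<Sum>j<length as. (if j = k then 1 else 0) * as ! j) = (\<Sum>j<length as. if j = k then as ! k else 0)"
    by (rule sum.cong) auto
  also have "\<dots> = x" using k by simp
  finally show ?thesis unfolding ideal_gen_def by (auto intro!: exI[of _ "\<lambda>j. if j = k then 1 else 0"])
qed

lemma ideal_gen_sub: "is_ideal J \<Longrightarrow> set as \<subseteq> J \<Longrightarrow> ideal_gen as \<subseteq> J"
  unfolding ideal_gen_def
  by (auto intro!: ideal_sum ideal_mult)

lemma krull:
  fixes I :: "'a::comm_ring_1 set"
  assumes "is_ideal I" "I \<noteq> UNIV"
  shows "\<exists>q. maximal_ideal q \<and> I \<subseteq> q"
proof -
  let ?A = "{J. is_ideal J \<and> I \<subseteq> J \<and> (1::'a) \<notin> J}"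
  have "\<forall>C\<in>chains ?A. \<exists>U\<in>?A. \<forall>X\<in>C. X \<subseteq> U"
  proof
    fix C assume C: "C \<in> chains ?A"
    show "\<exists>U\<in>?A. \<forall>X\<in>C. X \<subseteq> U"
    proof (cases "C = {}")
      case True then show ?thesis using assms ideal_one by auto
    next
      case False
      have CA: "C \<subseteq> ?A" using chainsD2[OF C] .
      have "is_ideal (\<Union>C)"
        unfolding is_ideal_def
      proof (intro conjI ballI allI)
        show "0 \<in> \<Union>C" using False CA by (auto simp: is_ideal_def)
      next
        fix x y assume "x \<in> \<Union>C" "y \<in> \<Union>C"
        then obtain X Y where "x \<in> X" "X \<in> C" "y \<in> Y" "Y \<in> C" by blast
        then have "x \<in> Y \<and> y \<in> Y \<and> Y \<in> C \<or> x \<in> X \<and> y \<in> X \<and> X \<in> C"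
          using chainsD[OF C, of X Y] by blast
        then show "x + y \<in> \<Union>C"
        proof
          assume h: "x \<in> Y \<and> y \<in> Y \<and> Y \<in> C"
          then have "is_ideal Y" using CA by blast
          then have "x + y \<in> Y" using h by (simp add: is_ideal_def)
          then show ?thesis using h by blast
        next
          assume h: "x \<in> X \<and> y \<in> X \<and> X \<in> C"
          then have "is_ideal X" using CA by blast
          then have "x + y \<in> X" using h by (simp add: is_ideal_def)
          then show ?thesis using h by blast
        qed
      next
        fix r x assume "x \<in> \<Union>C"
        then obtain X where "x \<in> X" "X \<in> C" by blast
        then have "is_ideal X" using CA by blast
        then have "r * x \<in> X" using \<open>x \<in> X\<close> by (simp add: is_ideal_def)
        then show "r * x \<in> \<Union>C" using \<open>X \<in> C\<close> by blast
      qed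
      moreover have "I \<subseteq> \<Union>C" using False CA by blast
      moreover have "1 \<notin> \<Union>C" using CA by blast
      ultimately have "\<Union>C \<in> ?A" by simp
      then show ?thesis by (intro bexI[of _ "\<Union>C"]) auto
    qed
  qed
  from Zorn_Lemma2[OF this] obtain M where M: "M \<in> ?A" "\<forall>X\<in>?A. M \<subseteq> X \<longrightarrow> X = M" by (elim bexE)
  have "maximal_ideal M"
    unfolding maximal_ideal_def
  proof (intro conjI allI impI)
    show "is_ideal M" using M by simp
    show "M \<noteq> UNIV" using M by auto
  next
    fix J assume J: "is_ideal J \<and> M \<subseteq> J"
    show "J = M \<or> J = UNIV"
    proof (cases "1 \<in> J")
      case True then show ?thesis using ideal_one J by blast
    next
      case False
      then have "J \<in> ?A" using J M(1) by auto
      then have "J = M" using M(2) J by blast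
      then show ?thesis by simp
    qed
  qed
  moreover have "I \<subseteq> M" using M(1) by simp
  ultimately show ?thesis by blast
qed


lemma W1:
  assumes "j \<in> {1..n}" "r \<in> m j" "maximal_ideal (m j)"
  shows "r \<in> dsq_W m n"
proof -
  have im: "is_ideal (m j)" using assms(3) by (simp add: maximal_ideal_def)
  have "\<forall>v. \<not> dsq_eq m n (\<lambda>i. r * v i) (\<lambda>i. 1)"
  proof (intro allI notI)
    fix v assume "dsq_eq m n (\<lambda>i. r * v i) (\<lambda>i. 1)"
    then have "r * v j - 1 \<in> m j" using assms(1) by (simp add: dsq_eq_def)
    then have "r * v j - (r * v j - 1) \<in> m j"
      by (rule ideal_diff[OF im ideal_mult2[OF im assms(2)]])
    then show False using max_one[OF assms(3)] by simp
  qed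
  then show ?thesis unfolding dsq_W_def mem_Collect_eq by (rule exI[of _ "\<lambda>i. 1"])
qed

lemma W2:
  assumes "\<forall>i\<in>{1..n}. maximal_ideal (m i)" "\<forall>i\<in>{1..n}. r \<notin> m i"
  shows "r \<notin> dsq_W m n"
proof -
  have "\<forall>i\<in>{1..n}. \<exists>s. r * s - 1 \<in> m i"
  proof
    fix i assume i: "i \<in> {1..n}"
    have "maximal_ideal (m i)" "r \<notin> m i" using assms i by auto
    then show "\<exists>s. r * s - 1 \<in> m i" by (rule max_inv)
  qed
  from bchoice[OF this] obtain s where s: "\<forall>i\<in>{1..n}. r * s i - 1 \<in> m i" by (elim exE)
  have ex: "\<exists>v. dsq_eq m n (\<lambda>i. r * v i) w" for w
  proof (intro exI[of _ "\<lambda>i. s i * w i"])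
    show "dsq_eq m n (\<lambda>i. r * (s i * w i)) w"
      unfolding dsq_eq_def
    proof
      fix i assume i: "i \<in> {1..n}"
      have im: "is_ideal (m i)" using assms(1) i by (simp add: maximal_ideal_def)
      have "r * (s i * w i) - w i = (r * s i - 1) * w i" by (simp add: algebra_simps)
      then show "r * (s i * w i) - w i \<in> m i" using ideal_mult2[OF im] s i by simp
    qed
  qed
  show ?thesis
  proof (unfold dsq_W_def mem_Collect_eq, rule notI, elim exE)
    fix w assume H: "\<forall>v. \<not> dsq_eq m n (\<lambda>i. r * v i) w"
    from ex[of w] obtain v where v: "dsq_eq m n (\<lambda>i. r * v i) w" by (elim exE)
    have "\<not> dsq_eq m n (\<lambda>i. r * v i) w" using H by (rule spec)
    then show False using v by (rule notE)
  qed
qed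

lemma IM1:
  assumes "k \<in> {1..n}" "maximal_ideal (m k)" "I \<subseteq> m k"
  shows "dsq_IM_ne m n I"
proof -
  have im: "is_ideal (m k)" using assms(2) by (simp add: maximal_ideal_def)
  have "\<forall>u\<in>dsq_IM I. \<not> dsq_eq m n u (\<lambda>i. 1)"
  proof (intro ballI notI)
    fix u assume uI: "u \<in> dsq_IM I" and e: "dsq_eq m n u (\<lambda>i. 1)"
    from uI have "\<exists>(K::nat) c xs. (\<forall>j<K. c j \<in> I) \<and> u = (\<lambda>i. \<Sum>j<K. c j * xs j i)"
      unfolding dsq_IM_def by simp
    then obtain K :: nat and c xs where c: "\<forall>j<K. c j \<in> I" and u: "u = (\<lambda>i. \<Sum>j<K. c j * xs j i)"
      by (elim exE conjE)
    have "\<forall>j\<in>{..<K}. c j * xs j k \<in> m k"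
    proof
      fix j assume "j \<in> {..<K}"
      then have "c j \<in> m k" using c assms(3) by auto
      then show "c j * xs j k \<in> m k" by (rule ideal_mult2[OF im])
    qed
    then have "(\<Sum>j<K. c j * xs j k) \<in> m k" by (rule ideal_sum[OF im])
    then have "u k \<in> m k" by (simp add: u)
    moreover have "u k - 1 \<in> m k" using e assms(1) by (simp add: dsq_eq_def)
    ultimately have "u k - (u k - 1) \<in> m k" using ideal_diff[OF im] by blast
    then show False using max_one[OF assms(2)] by simp
  qed
  then show ?thesis unfolding dsq_IM_ne_def by (rule exI[of _ "\<lambda>i. 1"])
qed

lemma IM2:
  assumes "\<forall>i\<in>{1..n}. maximal_ideal (m i)" "is_ideal I" "\<forall>i\<in>{1..n}. \<exists>a\<in>I. a \<notin> m i"
  shows "\<not> dsq_IM_ne m n I"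
proof -
  have "\<forall>i\<in>{1..n}. \<exists>p. fst p \<in> I \<and> fst p * snd p - 1 \<in> m i"
  proof
    fix i assume i: "i \<in> {1..n}"
    then obtain a where a: "a \<in> I" "a \<notin> m i" using assms(3) by blast
    have "maximal_ideal (m i)" using assms(1) i by blast
    from max_inv[OF this a(2)] obtain s where "a * s - 1 \<in> m i" by (elim exE)
    then show "\<exists>p. fst p \<in> I \<and> fst p * snd p - 1 \<in> m i" using a by (intro exI[of _ "(a, s)"]) simp
  qed
  from bchoice[OF this] obtain f where f: "\<forall>i\<in>{1..n}. fst (f i) \<in> I \<and> fst (f i) * snd (f i) - 1 \<in> m i"
    by (elim exE)
  define a where "a i = fst (f i)" for i
  define s where "s i = snd (f i)" for i
  have as: "\<forall>i\<in>{1..n}. a i \<in> I \<and> a i * s i - 1 \<in> m i" using f by (simp add: a_def s_def)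
  have ex: "\<exists>u\<in>dsq_IM I. dsq_eq m n u w" for w
  proof -
    define c where "c j = (if j \<in> {1..n} then a j else 0)" for j
    define xs where "xs j i = (if i = j then s j * w i else 0)" for j i
    define u where "u = (\<lambda>i. \<Sum>j<Suc n. c j * xs j i)"
    have "\<forall>j<Suc n. c j \<in> I" using as assms(2) by (auto simp: c_def is_ideal_def)
    then have "u \<in> dsq_IM I" unfolding dsq_IM_def u_def mem_Collect_eq
      by (intro exI[of _ "Suc n"] exI[of _ c] exI[of _ xs] conjI) simp_all
    moreover have "dsq_eq m n u w"
      unfolding dsq_eq_def
    proof
      fix i assume i: "i \<in> {1..n}"
      have im: "is_ideal (m i)" using assms(1) i by (simp add: maximal_ideal_def)
      have "u i = (\<Sum>j<Suc n. if j = i then c i * (s i * w i) else 0)"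
        unfolding u_def xs_def by (rule sum.cong) auto
      also have "\<dots> = a i * (s i * w i)" using i by (simp add: c_def)
      finally have "u i - w i = (a i * s i - 1) * w i" by (simp add: algebra_simps)
      then show "u i - w i \<in> m i" using ideal_mult2[OF im] as i by simp
    qed
    ultimately show ?thesis by blast
  qed
  show ?thesis
  proof (unfold dsq_IM_ne_def, rule notI, elim exE)
    fix w assume H: "\<forall>u\<in>dsq_IM I. \<not> dsq_eq m n u w"
    from ex[of w] obtain u where u: "u \<in> dsq_IM I" "dsq_eq m n u w" by (elim bexE)
    have "\<not> dsq_eq m n u w" using H u(1) by (rule bspec)
    then show False using u(2) by (rule notE)
  qed
qed

lemma max_not_sub:
  assumes "maximal_ideal p" "maximal_ideal q" "p \<noteq> q"
  shows "\<exists>x\<in>p. x \<notin> q"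
proof (rule ccontr)
  assume "\<not> ?thesis"
  then have sub: "p \<subseteq> q" by blast
  have "is_ideal q" "q \<noteq> UNIV" using assms(2) by (simp_all add: maximal_ideal_def)
  moreover have "\<forall>J. is_ideal J \<and> p \<subseteq> J \<longrightarrow> J = p \<or> J = UNIV" using assms(1) by (simp add: maximal_ideal_def)
  ultimately have "q = p" using sub by blast
  then show False using assms(3) by simp
qed

theorem theorem3p13:
  fixes m :: "nat \<Rightarrow> 'a::comm_ring_1 set" and n :: nat
  assumes "n \<ge> 1"
    and "\<forall>i\<in>{1..n}. maximal_ideal (m i)"
  shows "dsq_dual_pspA m n \<longleftrightarrow>
           (Max_spec = m ` {1..n} \<or> (\<forall>i\<in>{1..n}. \<forall>j\<in>{1..n}. m i = m j))"
proof
  assume D: "dsq_dual_pspA m n"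
  show "Max_spec = m ` {1..n} \<or> (\<forall>i\<in>{1..n}. \<forall>j\<in>{1..n}. m i = m j)"
  proof (rule ccontr)
    assume "\<not> ?thesis"
    then have n1: "Max_spec \<noteq> m ` {1..n}" and n2: "\<not> (\<forall>i\<in>{1..n}. \<forall>j\<in>{1..n}. m i = m j)" by simp_all
    from n2 obtain a b where ab: "a \<in> {1..n}" "b \<in> {1..n}" "m a \<noteq> m b" by blast
    have "m ` {1..n} \<subseteq> Max_spec" using assms(2) unfolding Max_spec_def by blast
    with n1 obtain p where "p \<in> Max_spec" "p \<notin> m ` {1..n}" by blast
    then have p: "maximal_ideal p" "p \<notin> m ` {1..n}" unfolding Max_spec_def by simp_all
    have pi: "is_ideal p" using p by (simp add: maximal_ideal_def)
    have "\<forall>i\<in>{1..n}. \<exists>y. y \<in> p \<and> (\<exists>j\<in>{1..n}. y \<in> m j) \<and> y \<notin> m i"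
    proof
      fix i assume i: "i \<in> {1..n}"
      have "\<exists>j\<in>{1..n}. m j \<noteq> m i"
      proof (cases "m a = m i")
        case True then show ?thesis using ab by (intro bexI[of _ b]) auto
      next
        case False then show ?thesis using ab by (intro bexI[of _ a]) auto
      qed
      then obtain j where j: "j \<in> {1..n}" "m j \<noteq> m i" by blast
      obtain x where x: "x \<in> p" "x \<notin> m i" using max_not_sub p assms(2) i by blast
      obtain z where z: "z \<in> m j" "z \<notin> m i" using max_not_sub j assms(2) i by blast
      have "x * z \<in> p" using ideal_mult2[OF pi x(1)] .
      moreover have "x * z \<in> m j" using ideal_mult[of "m j" z x] assms(2) j z(1) by (simp add: maximal_ideal_def mult.commute)
      moreover have "x * z \<notin> m i" using max_prime assms(2) i x(2) z(2) by blast
      ultimately show "\<exists>y. y \<in> p \<and> (\<exists>j\<in>{1..n}. y \<in> m j) \<and> y \<notin> m i" using j by blast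
    qed
    from bchoice[OF this] obtain y where y: "\<forall>i\<in>{1..n}. y i \<in> p \<and> (\<exists>j\<in>{1..n}. y i \<in> m j) \<and> y i \<notin> m i"
      by (elim exE)
    define as where "as = map y [1..<Suc n]"
    have setas: "set as = y ` {1..n}" unfolding as_def by auto
    have sW: "set as \<subseteq> dsq_W m n" unfolding setas using y W1 assms(2) by blast
    have "set as \<subseteq> p" using setas y by auto
    then have "ideal_gen as \<subseteq> p" using ideal_gen_sub[OF pi] by blast
    then have "ideal_gen as \<noteq> UNIV" using max_one[OF p(1)] by auto
    with sW have "dsq_IM_ne m n (ideal_gen as)" using D unfolding dsq_dual_pspA_def by blast
    moreover have "\<forall>i\<in>{1..n}. \<exists>a\<in>ideal_gen as. a \<notin> m i"
    proof
      fix i assume i: "i \<in> {1..n}"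
      have "y i \<in> set as" using setas i by simp
      then show "\<exists>a\<in>ideal_gen as. a \<notin> m i" using ideal_gen_mem y i by blast
    qed
    ultimately show False using IM2[OF assms(2) ideal_gen_ideal] by blast
  qed
next
  assume H: "Max_spec = m ` {1..n} \<or> (\<forall>i\<in>{1..n}. \<forall>j\<in>{1..n}. m i = m j)"
  have one: "1 \<in> {1..n}" using assms(1) by simp
  show "dsq_dual_pspA m n"
    unfolding dsq_dual_pspA_def
  proof (intro allI impI)
    fix as :: "'a list" assume A: "set as \<subseteq> dsq_W m n \<and> ideal_gen as \<noteq> UNIV"
    from H show "dsq_IM_ne m n (ideal_gen as)"
    proof
      assume M: "Max_spec = m ` {1..n}"
      obtain q where q: "maximal_ideal q" "ideal_gen as \<subseteq> q"
        using krull[OF ideal_gen_ideal] A by blast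
      have "q \<in> Max_spec" using q(1) unfolding Max_spec_def by simp
      then have "q \<in> m ` {1..n}" using M by simp
      then obtain k where k: "k \<in> {1..n}" "q = m k" by blast
      show ?thesis using IM1[of k n m "ideal_gen as"] k q by simp
    next
      assume E: "\<forall>i\<in>{1..n}. \<forall>j\<in>{1..n}. m i = m j"
      have "set as \<subseteq> m 1"
      proof
        fix r assume "r \<in> set as"
        then have "r \<in> dsq_W m n" using A by blast
        then have "\<not> (\<forall>i\<in>{1..n}. r \<notin> m i)" using W2[OF assms(2), of r] by blast
        then obtain i where "i \<in> {1..n}" "r \<in> m i" by blast
        then show "r \<in> m 1" using E one by metis
      qed
      moreover have "is_ideal (m 1)" using assms(2) one by (simp add: maximal_ideal_def)
      ultimately have "ideal_gen as \<subseteq> m 1" using ideal_gen_sub[of "m 1" as] by simp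
      then show ?thesis using IM1 one assms(2) by blast
    qed
  qed
qed

end
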